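(* Let $P$ be a positroid on $[n]$ and let $\mathfrak{I}\subseteq\mathcal{P}([n])$ be the collection of all cyclic intervals of $[n]$. For integers $i\le j$ with $[i,j]\ne[n]$, $a_{\mathfrak{I}}([i,j])$ equals the $(i,j)$ entry (which is $0$ or $1$) of the affine permutation matrix of $P$.
   Context: A positroid of rank $k$ on $[n]$ is the matroid of a real $k\times n$ matrix of rank $k$ with all maximal minors nonnegative. For integers $i,j$, $[i,j]$ denotes the cyclic interval $\{i,i+1,\dots,j\}$ read modulo $n$ (empty if $j=i-1$). The cyclic rank matrix is $r_{ij}=\mathrm{rk}_P([i,j])$ for integers $i,j$ with $0\le j-i\le n$, with $r_{ij}=0$ when $i>j$. The affine permutation matrix has entry $1$ at $(i,j)$ if $r_{ij}=r_{i,j-1}=r_{i+1,j}\ne r_{i+1,j-1}$ and $0$ otherwise. For $S\in\mathfrak{I}$, $c(S)=\#S-\mathrm{rk}\,S$ and $a_{\mathfrak{I}}(S)=c(S)-\sum_{T\in\mathfrak{I},T\subsetneq S}a_{\mathfrak{I}}(T)$ recursively, with $a_{\mathfrak{I}}(\varnothing)=0$. *)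

theory Defs
  imports Complex_Main "HOL-Combinatorics.Permutations"
begin

text \<open>Ground set [n] = {1..n} (as integers). A k x n real matrix is a function
  A :: nat => int => real, rows 0..k-1, columns 1..n.\<close>

definition ground :: "nat \<Rightarrow> int set" where
  "ground n = {1..int n}"

text \<open>Cyclic interval [i,j] = {i,...,j} read modulo n (representatives 1..n);
  empty when j < i.\<close>
definition cyc_int :: "nat \<Rightarrow> int \<Rightarrow> int \<Rightarrow> int set" where
  "cyc_int n i j = {((m - 1) mod int n) + 1 | m. i \<le> m \<and> m \<le> j}"

definition cyc_intervals :: "nat \<Rightarrow> int set set" where
  "cyc_intervals n = {cyc_int n i j | i j. True}"

definition col_indep :: "nat \<Rightarrow> (nat \<Rightarrow> int \<Rightarrow> real) \<Rightarrow> int set \<Rightarrow> bool" where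
  "col_indep k A T \<longleftrightarrow> finite T \<and>
     (\<forall>c::int \<Rightarrow> real. (\<forall>r<k. (\<Sum>j\<in>T. c j * A r j) = 0) \<longrightarrow> (\<forall>j\<in>T. c j = 0))"

definition mat_rank :: "nat \<Rightarrow> (nat \<Rightarrow> int \<Rightarrow> real) \<Rightarrow> int set \<Rightarrow> nat" where
  "mat_rank k A S = Max {card T | T. T \<subseteq> S \<and> col_indep k A T}"

definition max_minor :: "nat \<Rightarrow> (nat \<Rightarrow> int \<Rightarrow> real) \<Rightarrow> int set \<Rightarrow> real" where
  "max_minor k A J = (\<Sum>p | p permutes {..<k}.
      of_int (sign p) * (\<Prod>r<k. A r (sorted_list_of_set J ! p r)))"

definition totally_nonneg_full_rank :: "nat \<Rightarrow> nat \<Rightarrow> (nat \<Rightarrow> int \<Rightarrow> real) \<Rightarrow> bool" where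
  "totally_nonneg_full_rank n k A \<longleftrightarrow> mat_rank k A (ground n) = k \<and>
     (\<forall>J. J \<subseteq> ground n \<and> card J = k \<longrightarrow> max_minor k A J \<ge> 0)"

definition is_positroid :: "nat \<Rightarrow> (int set \<Rightarrow> nat) \<Rightarrow> bool" where
  "is_positroid n rk \<longleftrightarrow> (\<exists>k A. totally_nonneg_full_rank n k A \<and>
      (\<forall>S. S \<subseteq> ground n \<longrightarrow> rk S = mat_rank k A S))"

text \<open>a_I(S) = c(S) - sum of a_I(T) over T in I with T a proper subset of S; a_I({}) = 0.
  (Only finite S are relevant; infinite S get the dummy value 0.)\<close>
function a_coef :: "'a set set \<Rightarrow> ('a set \<Rightarrow> int) \<Rightarrow> 'a set \<Rightarrow> int" where
  "a_coef I c S = (if S = {} \<or> infinite S then 0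
      else c S - (\<Sum>T\<in>{T\<in>I. T \<subset> S}. a_coef I c T))"
  by auto
termination
  by (relation "measure (\<lambda>(I, c, S). card S)") (auto intro: psubset_card_mono)

text \<open>Cyclic rank matrix r_ij = rk([i,j]) for i <= j; for j < i we use the
  convention r_ij = j - i + 1 (so r_{i,i-1} = 0, r_{i+1,i-1} = -1).\<close>
definition cyc_rank_matrix :: "nat \<Rightarrow> (int set \<Rightarrow> nat) \<Rightarrow> int \<Rightarrow> int \<Rightarrow> int" where
  "cyc_rank_matrix n rk i j = (if i \<le> j then int (rk (cyc_int n i j)) else j - i + 1)"

definition aff_perm_entry :: "nat \<Rightarrow> (int set \<Rightarrow> nat) \<Rightarrow> int \<Rightarrow> int \<Rightarrow> int" where
  "aff_perm_entry n rk i j =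
     (let r = cyc_rank_matrix n rk in
      if r i j = r i (j - 1) \<and> r i (j - 1) = r (i + 1) j \<and> r (i + 1) j \<noteq> r (i + 1) (j - 1)
      then 1 else 0)"

end

theory Submission
  imports Defs "HOL-Library.Function_Algebras"
begin


interpretation fv: vector_space "\<lambda>(a::real) (f::nat\<Rightarrow>real). (\<lambda>r. a * f r)"
  by unfold_locales (auto simp: fun_eq_iff algebra_simps)

lemma sum_fun_app: "(\<Sum>j\<in>T. (g j :: nat \<Rightarrow> real)) r = (\<Sum>j\<in>T. g j r)"
  by (induction T rule: infinite_finite_induct) auto

definition colv :: "nat \<Rightarrow> (nat \<Rightarrow> int \<Rightarrow> real) \<Rightarrow> int \<Rightarrow> nat \<Rightarrow> real" where
  "colv k A j = (\<lambda>r. if r < k then A r j else 0)"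

lemma sum_colv_zero_iff:
  "((\<Sum>j\<in>T. (\<lambda>r. c j * colv k A j r)) = 0) \<longleftrightarrow> (\<forall>r<k. (\<Sum>j\<in>T. c j * A r j) = 0)"
proof
  assume h: "(\<Sum>j\<in>T. (\<lambda>r. c j * colv k A j r)) = 0"
  show "\<forall>r<k. (\<Sum>j\<in>T. c j * A r j) = 0"
  proof (intro allI impI)
    fix r assume "r < k"
    have "(\<Sum>j\<in>T. (\<lambda>r. c j * colv k A j r)) r = 0" using h by simp
    then show "(\<Sum>j\<in>T. c j * A r j) = 0" using \<open>r < k\<close> by (simp add: sum_fun_app colv_def)
  qed
next
  assume h: "\<forall>r<k. (\<Sum>j\<in>T. c j * A r j) = 0"
  show "(\<Sum>j\<in>T. (\<lambda>r. c j * colv k A j r)) = 0"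
  proof
    fix r show "(\<Sum>j\<in>T. (\<lambda>r. c j * colv k A j r)) r = 0 r"
      using h by (cases "r < k") (simp_all add: sum_fun_app colv_def)
  qed
qed

lemma col_indep_D:
  assumes "col_indep k A T"
  shows "finite T \<and> inj_on (colv k A) T \<and> fv.independent (colv k A ` T)"
proof -
  have fin: "finite T" using assms by (simp add: col_indep_def)
  have inj: "inj_on (colv k A) T"
  proof (rule inj_onI, rule ccontr)
    fix x y assume xy: "x \<in> T" "y \<in> T" "colv k A x = colv k A y" "x \<noteq> y"
    define c where "c = (\<lambda>j. if j = x then (1::real) else if j = y then -1 else 0)"
    have "\<forall>r<k. (\<Sum>j\<in>T. c j * A r j) = 0"
    proof (intro allI impI)
      fix r assume r: "r < k"
      have "A r x = A r y" using fun_cong[OF xy(3), of r] r by (simp add: colv_def)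
      have "(\<Sum>j\<in>T. c j * A r j) = (\<Sum>j\<in>{x,y}. c j * A r j)"
        using fin xy by (intro sum.mono_neutral_right) (auto simp: c_def)
      also have "\<dots> = 0" using xy \<open>A r x = A r y\<close> by (simp add: c_def)
      finally show "(\<Sum>j\<in>T. c j * A r j) = 0" .
    qed
    then have "c x = 0" using assms xy by (auto simp: col_indep_def)
    then show False by (simp add: c_def)
  qed
  have ind: "fv.independent (colv k A ` T)"
  proof
    assume "fv.dependent (colv k A ` T)"
    then obtain u where u: "\<exists>v\<in>colv k A ` T. u v \<noteq> 0"
      "(\<Sum>v\<in>colv k A ` T. (\<lambda>r. u v * v r)) = 0"
      using fv.dependent_finite[of "colv k A ` T"] fin by auto
    define c where "c = (\<lambda>j. u (colv k A j))"
    have "(\<Sum>j\<in>T. (\<lambda>r. c j * colv k A j r)) = 0"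
      using u(2) by (simp add: sum.reindex[OF inj] c_def)
    then have "\<forall>j\<in>T. c j = 0" using assms sum_colv_zero_iff by (auto simp: col_indep_def)
    then show False using u(1) by (auto simp: c_def)
  qed
  show ?thesis using fin inj ind by blast
qed

lemma col_indep_I:
  assumes "finite T" "inj_on (colv k A) T" "fv.independent (colv k A ` T)"
  shows "col_indep k A T"
  unfolding col_indep_def
proof (intro conjI assms(1) allI impI)
  fix c assume h: "\<forall>r<k. (\<Sum>j\<in>T. c j * A r j) = 0"
  define u where "u = (\<lambda>v. c (the_inv_into T (colv k A) v))"
  have "(\<Sum>j\<in>T. (\<lambda>r. c j * colv k A j r)) = 0" using h sum_colv_zero_iff by blast
  then have "(\<Sum>v\<in>colv k A ` T. (\<lambda>r. u v * v r)) = 0"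
    by (simp add: sum.reindex[OF assms(2)] u_def the_inv_into_f_f[OF assms(2)])
  then have "\<forall>v\<in>colv k A ` T. u v = 0"
    using fv.dependent_finite[of "colv k A ` T"] assms by auto
  then show "\<forall>j\<in>T. c j = 0" by (auto simp: u_def the_inv_into_f_f[OF assms(2)])
qed

lemma col_indep_subset: "col_indep k A T \<Longrightarrow> T' \<subseteq> T \<Longrightarrow> col_indep k A T'"
proof -
  assume a: "col_indep k A T" "T' \<subseteq> T"
  then have d: "finite T" "inj_on (colv k A) T" "fv.independent (colv k A ` T)" using col_indep_D by auto
  show ?thesis
  proof (rule col_indep_I)
    show "finite T'" using d a finite_subset by blast
    show "inj_on (colv k A) T'" using d a inj_on_subset by blast
    show "fv.independent (colv k A ` T')" using d(3) fv.independent_mono a(2) image_mono by blast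
  qed
qed

lemma col_indep_empty: "col_indep k A {}"
  by (simp add: col_indep_def)

lemma rk_set_finite: "finite S \<Longrightarrow> finite {card T | T. T \<subseteq> S \<and> col_indep k A T}"
proof -
  assume "finite S"
  have "{card T | T. T \<subseteq> S \<and> col_indep k A T} \<subseteq> card ` Pow S" by auto
  then show ?thesis using \<open>finite S\<close> finite_subset by blast
qed

lemma rk_set_ne: "{card T | T. T \<subseteq> S \<and> col_indep k A T} \<noteq> {}"
  using col_indep_empty by blast

lemma mat_rank_ge: "finite S \<Longrightarrow> T \<subseteq> S \<Longrightarrow> col_indep k A T \<Longrightarrow> card T \<le> mat_rank k A S"
  unfolding mat_rank_def by (rule Max_ge[OF rk_set_finite]) auto

lemma mat_rank_le: "finite S \<Longrightarrow> (\<And>T. T \<subseteq> S \<Longrightarrow> col_indep k A T \<Longrightarrow> card T \<le> m) \<Longrightarrow> mat_rank k A S \<le> m"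
  unfolding mat_rank_def using rk_set_finite[of S k A] rk_set_ne[of S k A]
  by (subst Max_le_iff) auto

lemma mat_rank_basis: "finite S \<Longrightarrow> \<exists>B. B \<subseteq> S \<and> col_indep k A B \<and> card B = mat_rank k A S"
proof -
  assume "finite S"
  have "mat_rank k A S \<in> {card T | T. T \<subseteq> S \<and> col_indep k A T}"
    unfolding mat_rank_def using Max_in[OF rk_set_finite[OF \<open>finite S\<close>] rk_set_ne] .
  then show ?thesis by auto
qed

lemma mat_rank_empty: "mat_rank k A {} = 0"
  using mat_rank_le[of "{}" k A 0] by simp

lemma mat_rank_mono: "finite S \<Longrightarrow> S' \<subseteq> S \<Longrightarrow> mat_rank k A S' \<le> mat_rank k A S"
  by (metis (no_types, lifting) finite_subset mat_rank_basis mat_rank_ge order.trans)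

lemma mat_rank_insert_le: "finite S \<Longrightarrow> mat_rank k A (insert e S) \<le> mat_rank k A S + 1"
proof (rule mat_rank_le)
  fix T assume S: "finite S" and T: "T \<subseteq> insert e S" "col_indep k A T"
  have "T - {e} \<subseteq> S" using T by auto
  moreover have "col_indep k A (T - {e})" using col_indep_subset T by blast
  ultimately have "card (T - {e}) \<le> mat_rank k A S" using mat_rank_ge S by blast
  moreover have "finite T" using T col_indep_def by blast
  ultimately show "card T \<le> mat_rank k A S + 1"
  proof -
    have "card T \<le> card (T - {e}) + 1"
      using \<open>finite T\<close> by (cases "e \<in> T") (auto simp: card_Diff_singleton)
    then show ?thesis using \<open>card (T - {e}) \<le> mat_rank k A S\<close> by linarith
  qed
qed simp

lemma basis_spans:
  assumes S: "finite S" and B: "B \<subseteq> S" "col_indep k A B" "card B = mat_rank k A S" and x: "x \<in> S"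
  shows "colv k A x \<in> fv.span (colv k A ` B)"
proof (rule ccontr)
  assume nx: "colv k A x \<notin> fv.span (colv k A ` B)"
  have Bd: "finite B" "inj_on (colv k A) B" "fv.independent (colv k A ` B)" using col_indep_D[OF B(2)] by auto
  have xB: "x \<notin> B" using nx fv.span_base by blast
  have "colv k A x \<notin> colv k A ` B" using nx fv.span_base by blast
  then have "inj_on (colv k A) (insert x B)" using Bd by auto
  moreover have "fv.independent (colv k A ` insert x B)"
    using fv.independent_insertI[OF nx Bd(3)] by simp
  ultimately have "col_indep k A (insert x B)" using col_indep_I Bd by auto
  then have "card (insert x B) \<le> mat_rank k A S" using mat_rank_ge[OF S] B x by auto
  then show False using B xB Bd by simp
qed

lemma span_bound:
  assumes T: "col_indep k A T" and B: "finite B" and sp: "colv k A ` T \<subseteq> fv.span (colv k A ` B)"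
  shows "card T \<le> card B"
proof -
  have Td: "finite T" "inj_on (colv k A) T" "fv.independent (colv k A ` T)" using col_indep_D[OF T] by auto
  have "card (colv k A ` T) \<le> card (colv k A ` B)"
    using fv.independent_span_bound[OF _ Td(3) sp] B by auto
  also have "\<dots> \<le> card B" by (rule card_image_le[OF B])
  finally show ?thesis using card_image[OF Td(2)] by simp
qed

lemma mat_rank_submod:
  assumes X: "finite X" and eq: "mat_rank k A (insert f X) = mat_rank k A X"
  shows "mat_rank k A (insert e (insert f X)) = mat_rank k A (insert e X)"
proof -
  obtain B where B: "B \<subseteq> X" "col_indep k A B" "card B = mat_rank k A X" using mat_rank_basis[OF X] by blast
  have Bd: "finite B" "inj_on (colv k A) B" "fv.independent (colv k A ` B)" using col_indep_D[OF B(2)] by auto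
  have fsp: "colv k A f \<in> fv.span (colv k A ` B)"
    using basis_spans[of "insert f X" B k A f] B eq X by auto
  obtain B' where B': "B' \<subseteq> insert e X" "col_indep k A B'" "card B' = mat_rank k A (insert e X)"
    using mat_rank_basis[of "insert e X"] X by blast
  have B'f: "finite B'" using B'(2) col_indep_def by blast
  have sp1: "\<And>x. x \<in> insert e X \<Longrightarrow> colv k A x \<in> fv.span (colv k A ` B')"
    using basis_spans[OF _ B'] X by auto
  have "colv k A ` B \<subseteq> fv.span (colv k A ` B')" using sp1 B(1) by auto
  then have "fv.span (colv k A ` B) \<subseteq> fv.span (colv k A ` B')"
    using fv.span_minimal fv.subspace_span by blast
  with fsp sp1 have all: "\<And>x. x \<in> insert e (insert f X) \<Longrightarrow> colv k A x \<in> fv.span (colv k A ` B')"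
    by auto
  have "mat_rank k A (insert e (insert f X)) \<le> mat_rank k A (insert e X)"
  proof (rule mat_rank_le)
    show "finite (insert e (insert f X))" using X by simp
    fix T assume "T \<subseteq> insert e (insert f X)" "col_indep k A T"
    then show "card T \<le> mat_rank k A (insert e X)"
      using span_bound[OF _ B'f, of k A T] all B'(3) by auto
  qed
  moreover have "mat_rank k A (insert e X) \<le> mat_rank k A (insert e (insert f X))"
    using mat_rank_mono[of "insert e (insert f X)" "insert e X" k A] X by auto
  ultimately show ?thesis by simp
qed



definition cm :: "nat \<Rightarrow> int \<Rightarrow> int" where "cm n m = (m - 1) mod int n + 1"

lemma cyc_int_img: "cyc_int n i j = cm n ` {i..j}"
  unfolding cyc_int_def cm_def by auto

lemma cm_ground: "0 < n \<Longrightarrow> cm n m \<in> ground n"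
proof -
  assume "0 < n" then have p: "0 < int n" by simp
  show ?thesis unfolding cm_def ground_def using pos_mod_bound[OF p, of "m - 1"] pos_mod_sign[OF p, of "m - 1"] by auto
qed

lemma cyc_int_sub_ground: "0 < n \<Longrightarrow> cyc_int n i j \<subseteq> ground n"
  using cm_ground cyc_int_img by auto

lemma cm_eq_iff: "cm n x = cm n y \<longleftrightarrow> int n dvd (x - y)"
proof -
  have "cm n x = cm n y \<longleftrightarrow> (x - 1) mod int n = (y - 1) mod int n" unfolding cm_def by simp
  also have "\<dots> \<longleftrightarrow> int n dvd ((x - 1) - (y - 1))" by (rule mod_eq_dvd_iff)
  finally show ?thesis by simp
qed

lemma dvd_small: "int n dvd z \<Longrightarrow> \<bar>z\<bar> < int n \<Longrightarrow> z = 0"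
proof (rule ccontr)
  assume "int n dvd z" "\<bar>z\<bar> < int n" "z \<noteq> 0"
  then have "\<bar>int n\<bar> \<le> \<bar>z\<bar>" using dvd_imp_le_int by blast
  then show False using \<open>\<bar>z\<bar> < int n\<close> by simp
qed

lemma cm_inj: "b - a < int n \<Longrightarrow> inj_on (cm n) {a..b}"
proof (rule inj_onI)
  fix x y assume "b - a < int n" "x \<in> {a..b}" "y \<in> {a..b}" "cm n x = cm n y"
  then have "int n dvd (x - y)" "\<bar>x - y\<bar> < int n" using cm_eq_iff by auto
  then have "x - y = 0" by (rule dvd_small)
  then show "x = y" by simp
qed

lemma cyc_int_ground: assumes "0 < n" "int n \<le> j - i + 1" shows "cyc_int n i j = ground n"
proof
  have p: "0 < int n" using assms by simp
  show "cyc_int n i j \<subseteq> ground n" using cyc_int_sub_ground assms by auto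
  show "ground n \<subseteq> cyc_int n i j"
  proof
    fix g assume g: "g \<in> ground n"
    define m where "m = i + (g - i) mod int n"
    have "0 \<le> (g - i) mod int n" "(g - i) mod int n < int n"
      using pos_mod_bound[OF p, of "g - i"] pos_mod_sign[OF p, of "g - i"] by auto
    then have "m \<in> {i..j}" using assms(2) unfolding m_def by auto
    moreover have "cm n m = cm n g"
    proof -
      have "m - g = - ((g - i) - (g - i) mod int n)" unfolding m_def by simp
      also have "\<dots> = - (int n * ((g - i) div int n))" by (simp add: minus_mod_eq_mult_div)
      finally show ?thesis unfolding cm_eq_iff by simp
    qed
    moreover have "cm n g = g"
    proof -
      have "0 \<le> g - 1" "g - 1 < int n" using g unfolding ground_def by auto
      then have "(g - 1) mod int n = g - 1" by (rule mod_pos_pos_trivial)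
      then show ?thesis unfolding cm_def by simp
    qed
    ultimately show "g \<in> cyc_int n i j" unfolding cyc_int_img by (metis image_eqI)
  qed
qed


lemma cm_shift: "int n dvd d \<Longrightarrow> cm n (m + d) = cm n m"
  unfolding cm_eq_iff by simp

lemma cm_img_shift:
  assumes "int n dvd (x0 - p)"
  shows "cm n ` {p..q} = cm n ` {x0..x0 + (q - p)}"
proof
  show "cm n ` {p..q} \<subseteq> cm n ` {x0..x0 + (q - p)}"
  proof
    fix t assume "t \<in> cm n ` {p..q}"
    then obtain m where m: "m \<in> {p..q}" "t = cm n m" by blast
    have "t = cm n (m + (x0 - p))" using cm_shift[OF assms, of m] m by simp
    moreover have "m + (x0 - p) \<in> {x0..x0 + (q - p)}" using m by auto
    ultimately show "t \<in> cm n ` {x0..x0 + (q - p)}" by blast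
  qed
  show "cm n ` {x0..x0 + (q - p)} \<subseteq> cm n ` {p..q}"
  proof
    fix t assume "t \<in> cm n ` {x0..x0 + (q - p)}"
    then obtain m where m: "m \<in> {x0..x0 + (q - p)}" "t = cm n m" by blast
    have d: "int n dvd - (x0 - p)" using assms by (simp only: dvd_minus_iff)
    have "t = cm n (m + - (x0 - p))" using cm_shift[OF d, of m] m by simp
    moreover have "m + - (x0 - p) \<in> {p..q}" using m by auto
    ultimately show "t \<in> cm n ` {p..q}" by blast
  qed
qed

lemma sub_intervals:
  assumes n: "0 < n" and ab: "a \<le> b" "b - a + 1 < int n"
  shows "{T \<in> cyc_intervals n. T \<subset> cyc_int n a b}
     = insert {} ((\<lambda>(x,y). cyc_int n x y) ` (Sigma {a..b} (\<lambda>x. {x..b}) - {(a,b)}))"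
proof
  have inj: "inj_on (cm n) {a..b}" using cm_inj ab by simp
  have S: "cyc_int n a b = cm n ` {a..b}" by (rule cyc_int_img)
  show "insert {} ((\<lambda>(x,y). cyc_int n x y) ` (Sigma {a..b} (\<lambda>x. {x..b}) - {(a,b)}))
      \<subseteq> {T \<in> cyc_intervals n. T \<subset> cyc_int n a b}"
  proof
    fix T assume T: "T \<in> insert {} ((\<lambda>(x,y). cyc_int n x y) ` (Sigma {a..b} (\<lambda>x. {x..b}) - {(a,b)}))"
    show "T \<in> {T \<in> cyc_intervals n. T \<subset> cyc_int n a b}"
    proof (cases "T = {}")
      case True
      have "cyc_int n 1 0 = {}" unfolding cyc_int_img by simp
      then have "T \<in> cyc_intervals n" unfolding cyc_intervals_def using True by blast
      moreover have "cm n a \<in> cyc_int n a b" using S ab by auto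
      ultimately show ?thesis using True by auto
    next
      case False
      then obtain pr where pr: "pr \<in> Sigma {a..b} (\<lambda>x. {x..b}) - {(a,b)}" "T = (\<lambda>(x,y). cyc_int n x y) pr"
        using T by blast
      obtain x y where "pr = (x, y)" by (cases pr)
      then have xy: "x \<in> {a..b}" "y \<in> {x..b}" "(x,y) \<noteq> (a,b)" "T = cyc_int n x y"
        using pr by auto
      have "T \<in> cyc_intervals n" unfolding cyc_intervals_def using xy by blast
      moreover have sub: "{x..y} \<subseteq> {a..b}" using xy by auto
      have "T \<subseteq> cyc_int n a b" using xy(4) S sub cyc_int_img by auto
      moreover have "T \<noteq> cyc_int n a b"
      proof
        assume "T = cyc_int n a b"
        then have "cm n ` {x..y} = cm n ` {a..b}" using xy(4) S cyc_int_img by simp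
        then have "{x..y} = {a..b}" using inj_on_image_eq_iff[OF inj sub] by simp
        then have "x = a" "y = b" using xy ab by (auto simp: Icc_eq_Icc)
        then show False using xy(3) by simp
      qed
      ultimately show ?thesis by auto
    qed
  qed
  show "{T \<in> cyc_intervals n. T \<subset> cyc_int n a b}
      \<subseteq> insert {} ((\<lambda>(x,y). cyc_int n x y) ` (Sigma {a..b} (\<lambda>x. {x..b}) - {(a,b)}))"
  proof
    fix T assume T: "T \<in> {T \<in> cyc_intervals n. T \<subset> cyc_int n a b}"
    then obtain p q where pq: "T = cyc_int n p q" unfolding cyc_intervals_def by blast
    have Tsub: "T \<subset> cyc_int n a b" using T by blast
    show "T \<in> insert {} ((\<lambda>(x,y). cyc_int n x y) ` (Sigma {a..b} (\<lambda>x. {x..b}) - {(a,b)}))"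
    proof (cases "q < p")
      case True
      then have "T = {}" using pq cyc_int_img by simp
      then show ?thesis by simp
    next
      case False
      show ?thesis
      proof (cases "int n \<le> q - p + 1")
        case True
        then have "T = ground n" using pq cyc_int_ground n by simp
        then show ?thesis using Tsub cyc_int_sub_ground[OF n, of a b] by auto
      next
        case small: False
        have "cm n p \<in> T" using pq cyc_int_img False by auto
        then have "cm n p \<in> cm n ` {a..b}" using Tsub S by auto
        then obtain x0 where x0: "x0 \<in> {a..b}" "cm n p = cm n x0" by auto
        have dv: "int n dvd (x0 - p)" using x0(2) cm_eq_iff by metis
        have T2: "T = cm n ` {x0..x0 + (q - p)}" using pq cyc_int_img cm_img_shift[OF dv] by simp
        show ?thesis
        proof (cases "x0 + (q - p) \<le> b")
          case True
          have "(x0, x0 + (q - p)) \<noteq> (a, b)"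
          proof
            assume "(x0, x0 + (q - p)) = (a, b)"
            then have "x0 = a" "x0 + (q - p) = b" by auto
            then have "T = cyc_int n a b" using T2 S by simp
            then show False using Tsub by simp
          qed
          moreover have "T = cyc_int n x0 (x0 + (q - p))" using T2 cyc_int_img by simp
          ultimately show ?thesis using True x0 False by auto
        next
          case big: False
          have "b + 1 \<in> {x0..x0 + (q - p)}" using big x0 by auto
          then have "cm n (b + 1) \<in> T" using T2 by blast
          then have "cm n (b + 1) \<in> cm n ` {a..b}" using Tsub S by blast
          then obtain y where y: "y \<in> {a..b}" "cm n (b + 1) = cm n y" by auto
          then have "int n dvd (b + 1 - y)" using cm_eq_iff by metis
          moreover have "\<bar>b + 1 - y\<bar> < int n" using y ab by auto
          ultimately have "b + 1 - y = 0" by (rule dvd_small)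
          then show ?thesis using y by auto
        qed
      qed
    qed
  qed
qed


lemma tele_down:
  fixes h :: "int \<Rightarrow> int"
  assumes "a - 1 \<le> b"
  shows "(\<Sum>y\<in>{a..b}. h y - h (y - 1)) = h b - h (a - 1)"
  using assms
proof (induction b rule: int_ge_induct)
  case base then show ?case by simp
next
  case (step b)
  have "{a..b+1} = insert (b+1) {a..b}" using step by auto
  then show ?case using step by simp
qed

lemma tele_up:
  fixes h :: "int \<Rightarrow> int"
  assumes "a - 1 \<le> b"
  shows "(\<Sum>x\<in>{a..b}. h x - h (x + 1)) = h a - h (b + 1)"
  using tele_down[OF assms, of "\<lambda>y. - h (y + 1)"] by simp

lemma tele2:
  fixes G :: "int \<Rightarrow> int \<Rightarrow> int"
  assumes z: "\<And>x y. y < x \<Longrightarrow> G x y = 0" and ab: "a - 1 \<le> b"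
  shows "(\<Sum>(x,y)\<in>Sigma {a..b} (\<lambda>x. {x..b}). G x y - G (x+1) y - G x (y-1) + G (x+1) (y-1)) = G a b"
proof -
  have "(\<Sum>(x,y)\<in>Sigma {a..b} (\<lambda>x. {x..b}). G x y - G (x+1) y - G x (y-1) + G (x+1) (y-1))
      = (\<Sum>x\<in>{a..b}. \<Sum>y\<in>{x..b}. G x y - G (x+1) y - G x (y-1) + G (x+1) (y-1))"
    by (rule sum.Sigma[symmetric]) auto
  also have "\<dots> = (\<Sum>x\<in>{a..b}. G x b - G (x+1) b)"
  proof (rule sum.cong[OF refl])
    fix x assume x: "x \<in> {a..b}"
    have "(\<Sum>y\<in>{x..b}. G x y - G (x+1) y - G x (y-1) + G (x+1) (y-1))
        = (\<Sum>y\<in>{x..b}. (G x y - G (x+1) y) - (G x (y-1) - G (x+1) (y-1)))"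
      by (rule sum.cong) auto
    also have "\<dots> = (G x b - G (x+1) b) - (G x (x-1) - G (x+1) (x-1))"
      using tele_down[of x b "\<lambda>y. G x y - G (x+1) y"] x by simp
    also have "\<dots> = G x b - G (x+1) b" using z[of "x-1" x] z[of "x-1" "x+1"] by simp
    finally show "(\<Sum>y\<in>{x..b}. G x y - G (x+1) y - G x (y-1) + G (x+1) (y-1)) = G x b - G (x+1) b" .
  qed
  also have "\<dots> = G a b - G (b+1) b" using tele_up[OF ab, of "\<lambda>x. G x b"] by simp
  also have "\<dots> = G a b" using z[of b "b+1"] by simp
  finally show ?thesis .
qed

definition cpf :: "nat \<Rightarrow> (int set \<Rightarrow> int) \<Rightarrow> int \<Rightarrow> int \<Rightarrow> int" where
  "cpf n c x y = (if x \<le> y then c (cyc_int n x y) else 0)"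

definition Df :: "nat \<Rightarrow> (int set \<Rightarrow> int) \<Rightarrow> int \<Rightarrow> int \<Rightarrow> int" where
  "Df n c x y = cpf n c x y - cpf n c (x+1) y - cpf n c x (y-1) + cpf n c (x+1) (y-1)"

lemma a_coef_D:
  assumes n: "0 < n"
  shows "a \<le> b \<Longrightarrow> b - a + 1 < int n \<Longrightarrow> a_coef (cyc_intervals n) c (cyc_int n a b) = Df n c a b"
proof (induction "nat (b - a)" arbitrary: a b rule: less_induct)
  case less
  define I where "I = cyc_intervals n"
  define Q where "Q = Sigma {a..b} (\<lambda>x. {x..b}) - {(a,b)}"
  define g where "g = (\<lambda>(x::int,y::int). cyc_int n x y)"
  have S: "cyc_int n a b = cm n ` {a..b}" by (rule cyc_int_img)
  have ne: "cyc_int n a b \<noteq> {}" using S less by auto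
  have fin: "finite (cyc_int n a b)" using S by simp
  have inj: "inj_on (cm n) {a..b}" using cm_inj less by simp
  have injg: "inj_on g Q"
  proof (rule inj_onI)
    fix p1 p2 assume p: "p1 \<in> Q" "p2 \<in> Q" "g p1 = g p2"
    obtain x1 y1 where 1: "p1 = (x1,y1)" by (cases p1)
    obtain x2 y2 where 2: "p2 = (x2,y2)" by (cases p2)
    have s1: "{x1..y1} \<subseteq> {a..b}" "x1 \<le> y1" using p 1 unfolding Q_def by auto
    have s2: "{x2..y2} \<subseteq> {a..b}" "x2 \<le> y2" using p 2 unfolding Q_def by auto
    have "cm n ` {x1..y1} = cm n ` {x2..y2}" using p 1 2 unfolding g_def by (simp add: cyc_int_img)
    then have "{x1..y1} = {x2..y2}" using inj_on_image_eq_iff[OF inj s1(1) s2(1)] by simp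
    then show "p1 = p2" using 1 2 s1 s2 by (simp add: Icc_eq_Icc)
  qed
  have emp: "{} \<notin> g ` Q"
  proof
    assume "{} \<in> g ` Q"
    then obtain x y where "(x,y) \<in> Q" "cyc_int n x y = {}" unfolding g_def by auto
    then show False unfolding Q_def by (auto simp: cyc_int_img)
  qed
  have sub: "{T \<in> I. T \<subset> cyc_int n a b} = insert {} (g ` Q)"
    unfolding I_def Q_def g_def using sub_intervals[OF n less(2) less(3)] by simp
  have IH: "\<And>p. p \<in> Q \<Longrightarrow> a_coef I c (g p) = Df n c (fst p) (snd p)"
  proof -
    fix p assume p: "p \<in> Q"
    obtain x y where xy: "p = (x,y)" by (cases p)
    have "x \<le> y" "nat (y - x) < nat (b - a)" "y - x + 1 < int n" using p xy less(3) unfolding Q_def by auto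
    then show "a_coef I c (g p) = Df n c (fst p) (snd p)"
      using less(1)[of y x] xy unfolding g_def I_def by simp
  qed
  have finQ: "finite Q" unfolding Q_def by auto
  have "(\<Sum>T\<in>{T \<in> I. T \<subset> cyc_int n a b}. a_coef I c T) = (\<Sum>T\<in>g ` Q. a_coef I c T)"
    unfolding sub using emp finQ by (simp add: sum.insert)
  also have "\<dots> = (\<Sum>p\<in>Q. a_coef I c (g p))" using sum.reindex[OF injg, of "a_coef I c"] by (simp add: comp_def)
  also have "\<dots> = (\<Sum>p\<in>Q. Df n c (fst p) (snd p))" using IH by simp
  also have "\<dots> = (\<Sum>p\<in>Sigma {a..b} (\<lambda>x. {x..b}). Df n c (fst p) (snd p)) - Df n c a b"
    unfolding Q_def using less(2) by (subst sum_diff1) auto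
  also have "(\<Sum>p\<in>Sigma {a..b} (\<lambda>x. {x..b}). Df n c (fst p) (snd p)) = cpf n c a b"
  proof -
    have "(\<Sum>p\<in>Sigma {a..b} (\<lambda>x. {x..b}). Df n c (fst p) (snd p))
       = (\<Sum>(x,y)\<in>Sigma {a..b} (\<lambda>x. {x..b}). cpf n c x y - cpf n c (x+1) y - cpf n c x (y-1) + cpf n c (x+1) (y-1))"
      unfolding Df_def by (simp add: case_prod_beta)
    also have "\<dots> = cpf n c a b" using less(2) by (intro tele2) (auto simp: cpf_def)
    finally show ?thesis .
  qed
  finally have sm: "(\<Sum>T\<in>{T \<in> I. T \<subset> cyc_int n a b}. a_coef I c T) = cpf n c a b - Df n c a b" .
  have "a_coef I c (cyc_int n a b) = c (cyc_int n a b) - (\<Sum>T\<in>{T \<in> I. T \<subset> cyc_int n a b}. a_coef I c T)"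
    using ne fin by (subst a_coef.simps) simp
  also have "\<dots> = Df n c a b" using sm less(2) by (simp add: cpf_def)
  finally show ?case unfolding I_def .
qed


lemma card_cyc: "x \<le> y + 1 \<Longrightarrow> y - x + 1 < int n \<Longrightarrow> int (card (cyc_int n x y)) = y - x + 1"
proof -
  assume a: "x \<le> y + 1" "y - x + 1 < int n"
  have "inj_on (cm n) {x..y}" using cm_inj a by simp
  then have "card (cyc_int n x y) = card {x..y}" unfolding cyc_int_img by (rule card_image)
  then show ?thesis using a by simp
qed

theorem lemma6p14:
  fixes n :: nat and rk :: "int set \<Rightarrow> nat" and i j :: int
  assumes "0 < n"
    and "is_positroid n rk"
    and "i \<le> j"
    and "cyc_int n i j \<noteq> ground n"
  shows "a_coef (cyc_intervals n) (\<lambda>S. int (card S) - int (rk S)) (cyc_int n i j)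
           = aff_perm_entry n rk i j"
proof -
  obtain k A where kA: "\<And>S. S \<subseteq> ground n \<Longrightarrow> rk S = mat_rank k A S"
    using assms(2) unfolding is_positroid_def by blast
  define c where "c = (\<lambda>S. int (card S) - int (rk S))"
  have len: "j - i + 1 < int n"
  proof (rule ccontr)
    assume "\<not> j - i + 1 < int n"
    then have "int n \<le> j - i + 1" by simp
    then have "cyc_int n i j = ground n" by (rule cyc_int_ground[OF assms(1)])
    then show False using assms(4) by simp
  qed
  have aD: "a_coef (cyc_intervals n) c (cyc_int n i j) = Df n c i j"
    using a_coef_D[OF assms(1) assms(3) len] .
  have fing: "finite (ground n)" unfolding ground_def by simp
  have sg: "\<And>x y. cyc_int n x y \<subseteq> ground n" using cyc_int_sub_ground[OF assms(1)] .
  have finc: "\<And>x y. finite (cyc_int n x y)" using sg fing finite_subset by blast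
  have rk0: "rk {} = 0" using kA[of "{}"] mat_rank_empty by simp
  have cpv: "\<And>x y. x \<le> y + 1 \<Longrightarrow> y - x + 1 < int n \<Longrightarrow> cpf n c x y = (y - x + 1) - int (rk (cyc_int n x y))"
  proof -
    fix x y :: int assume a: "x \<le> y + 1" "y - x + 1 < int n"
    show "cpf n c x y = (y - x + 1) - int (rk (cyc_int n x y))"
    proof (cases "x \<le> y")
      case True then show ?thesis using card_cyc[OF a] by (simp add: cpf_def c_def)
    next
      case False
      then have "y = x - 1" using a by simp
      then have "cyc_int n x y = {}" by (simp add: cyc_int_img)
      then show ?thesis using False \<open>y = x - 1\<close> rk0 by (simp add: cpf_def)
    qed
  qed
  have rmv: "\<And>x y. x \<le> y + 1 \<Longrightarrow> cyc_rank_matrix n rk x y = int (rk (cyc_int n x y))"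
  proof -
    fix x y :: int assume a: "x \<le> y + 1"
    show "cyc_rank_matrix n rk x y = int (rk (cyc_int n x y))"
    proof (cases "x \<le> y")
      case True then show ?thesis by (simp add: cyc_rank_matrix_def)
    next
      case False
      then have "y = x - 1" using a by simp
      then have "cyc_int n x y = {}" by (simp add: cyc_int_img)
      then show ?thesis using False \<open>y = x - 1\<close> rk0 by (simp add: cyc_rank_matrix_def)
    qed
  qed
  show ?thesis
  proof (cases "i = j")
    case True
    have s1: "cyc_int n i i = insert (cm n i) {}" by (simp add: cyc_int_img)
    have "rk (cyc_int n i i) \<le> 1"
      using kA[OF sg[of i i]] mat_rank_insert_le[of "{}" k A "cm n i"] mat_rank_empty s1 by simp
    moreover have "Df n c i i = 1 - int (rk (cyc_int n i i))"
      unfolding Df_def using cpv[of i i] len True by (simp add: cpf_def)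
    moreover have "aff_perm_entry n rk i i = (if rk (cyc_int n i i) = 0 then 1 else 0)"
      unfolding aff_perm_entry_def Let_def by (simp add: cyc_rank_matrix_def)
    ultimately show ?thesis using aD True unfolding c_def by auto
  next
    case False
    then have ij: "i < j" using assms(3) by simp
    define X where "X = cyc_int n (i+1) (j-1)"
    define e where "e = cm n i"
    define f where "f = cm n j"
    have "{i..j} = insert i (insert j {i+1..j-1})" using ij by auto
    then have E1: "cyc_int n i j = insert e (insert f X)" unfolding X_def e_def f_def cyc_int_img by simp
    have "{i..j-1} = insert i {i+1..j-1}" using ij by auto
    then have E2: "cyc_int n i (j-1) = insert e X" unfolding X_def e_def cyc_int_img by simp
    have "{i+1..j} = insert j {i+1..j-1}" using ij by auto
    then have E3: "cyc_int n (i+1) j = insert f X" unfolding X_def f_def cyc_int_img by simp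
    have finX: "finite X" unfolding X_def by (rule finc)
    define R where "R = rk (insert e (insert f X))"
    define Re where "Re = rk (insert e X)"
    define Rf where "Rf = rk (insert f X)"
    define R0 where "R0 = rk X"
    have MR: "R = mat_rank k A (insert e (insert f X))" "Re = mat_rank k A (insert e X)"
      "Rf = mat_rank k A (insert f X)" "R0 = mat_rank k A X"
      unfolding R_def Re_def Rf_def R0_def using kA sg E1 E2 E3 X_def by metis+
    have ins: "insert e (insert f X) = insert f (insert e X)" by auto
    have b1: "R \<le> Rf + 1" "Rf \<le> R" using MR mat_rank_insert_le[of "insert f X" k A e] mat_rank_mono[of "insert e (insert f X)" "insert f X" k A] finX by auto
    have b2: "R \<le> Re + 1" "Re \<le> R" using MR ins mat_rank_insert_le[of "insert e X" k A f] mat_rank_mono[of "insert f (insert e X)" "insert e X" k A] finX by auto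
    have b3: "Re \<le> R0 + 1" "R0 \<le> Re" using MR mat_rank_insert_le[of X k A e] mat_rank_mono[of "insert e X" X k A] finX by auto
    have b4: "Rf \<le> R0 + 1" "R0 \<le> Rf" using MR mat_rank_insert_le[of X k A f] mat_rank_mono[of "insert f X" X k A] finX by auto
    have sm: "Rf = R0 \<Longrightarrow> R = Re" using MR mat_rank_submod[OF finX] by metis
    have D: "Df n c i j = int Rf + int Re - int R - int R0"
      unfolding Df_def using cpv[of i j] cpv[of "i+1" j] cpv[of i "j-1"] cpv[of "i+1" "j-1"] ij len
        E1 E2 E3 X_def R_def Re_def Rf_def R0_def by simp
    have P: "aff_perm_entry n rk i j = (if R = Re \<and> Re = Rf \<and> Rf \<noteq> R0 then 1 else 0)"
      unfolding aff_perm_entry_def Let_def using rmv[of i j] rmv[of "i+1" j] rmv[of i "j-1"] rmv[of "i+1" "j-1"] ij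
        E1 E2 E3 X_def R_def Re_def Rf_def R0_def by simp
    have "int Rf + int Re - int R - int R0 = (if R = Re \<and> Re = Rf \<and> Rf \<noteq> R0 then 1 else 0)"
      using b1 b2 b3 b4 sm by (cases "Rf = R0") auto
    then show ?thesis using aD D P unfolding c_def by simp
  qed
qed

end
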